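(* Let $p\ge 1$ and let $L$ be an H$_p$-A$(1)$ algebra over $\mathbb{C}$. Then $L$ has a basis $\{ x_1, \dots, x_{2p+1}, y \}$ such that $NP(L) = \mathrm{Span}\{ y \}$, $$[x_1, x_2] = [x_3,x_4]=\cdots = [x_{2p-1}, x_{2p}] = x_{2p+1},$$ $$[x_1, y] = y, \qquad [x_i, y] = 0 \ \text{ for } i=2, \dots, 2p+1,$$ and $[x_i, x_j] = 0$ for all $1\le i<j\le 2p+1$ with $(i,j) \neq (2l-1, 2l)$, $l = 1, \dots, p$. Consequently, for each fixed $p$, any two H$_p$-A$(1)$ algebras are isomorphic.
   Context: For a finite-dimensional Lie algebra $L$, the lower central series is $L^0=L$, $L^{k+1}=[L,L^k]$, and the near perfect radical $NP(L)$ is its smallest term (equivalently, the largest ideal $I$ of $L$ with $[L,I]=I$). The Heisenberg algebra H$_p$ is the $(2p+1)$-dimensional Lie algebra with basis $\{e_1,\dots,e_{2p+1}\}$ whose only nonzero brackets (up to antisymmetry) are $[e_1,e_2]=[e_3,e_4]=\cdots=[e_{2p-1},e_{2p}]=e_{2p+1}$. $L$ is called an H$_p$-A$(n)$ algebra if $L/NP(L)$ is isomorphic to H$_p$ and $NP(L)$ is an Abelian Lie algebra of dimension $n$. *)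

theory Defs
  imports Complex_Main
begin

definition lie_algebra :: "(complex \<Rightarrow> 'a::ab_group_add \<Rightarrow> 'a) \<Rightarrow> ('a \<Rightarrow> 'a \<Rightarrow> 'a) \<Rightarrow> bool" where
  "lie_algebra sm br \<longleftrightarrow> vector_space sm
     \<and> (\<forall>x y z. br (x + y) z = br x z + br y z)
     \<and> (\<forall>x y z. br x (y + z) = br x y + br x z)
     \<and> (\<forall>c x y. br (sm c x) y = sm c (br x y))
     \<and> (\<forall>c x y. br x (sm c y) = sm c (br x y))
     \<and> (\<forall>x. br x x = 0)
     \<and> (\<forall>x y z. br x (br y z) + br y (br z x) + br z (br x y) = 0)"

definition fin_dim :: "(complex \<Rightarrow> 'a::ab_group_add \<Rightarrow> 'a) \<Rightarrow> bool" where
  "fin_dim sm \<longleftrightarrow> (\<exists>B. finite B \<and> module.span sm B = UNIV)"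

fun lcs :: "(complex \<Rightarrow> 'a::ab_group_add \<Rightarrow> 'a) \<Rightarrow> ('a \<Rightarrow> 'a \<Rightarrow> 'a) \<Rightarrow> nat \<Rightarrow> 'a set" where
  "lcs sm br 0 = UNIV"
| "lcs sm br (Suc k) = module.span sm {br x y | x y. y \<in> lcs sm br k}"

text \<open>Near perfect radical: the smallest term of the (decreasing) lower central series,
i.e. the intersection of all its terms.\<close>
definition NP :: "(complex \<Rightarrow> 'a::ab_group_add \<Rightarrow> 'a) \<Rightarrow> ('a \<Rightarrow> 'a \<Rightarrow> 'a) \<Rightarrow> 'a set" where
  "NP sm br = (\<Inter>k. lcs sm br k)"

text \<open>Heisenberg algebra H_p realised on coordinate vectors nat => complex supported
on {1..2p+1} (coordinate i = coefficient of e_i).\<close>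
definition heis_carrier :: "nat \<Rightarrow> (nat \<Rightarrow> complex) set" where
  "heis_carrier p = {v. \<forall>i. i \<notin> {1..2*p+1} \<longrightarrow> v i = 0}"

definition heis_br :: "nat \<Rightarrow> (nat \<Rightarrow> complex) \<Rightarrow> (nat \<Rightarrow> complex) \<Rightarrow> (nat \<Rightarrow> complex)" where
  "heis_br p u v = (\<lambda>i. if i = 2*p+1
      then (\<Sum>l\<in>{1..p}. u (2*l-1) * v (2*l) - u (2*l) * v (2*l-1)) else 0)"

text \<open>L is an H_p-A(n) algebra: L/NP(L) is isomorphic to H_p (expressed as a surjective
Lie algebra homomorphism onto H_p with kernel NP(L)), and NP(L) is abelian of dimension n.\<close>
definition HpA :: "nat \<Rightarrow> nat \<Rightarrow> (complex \<Rightarrow> 'a::ab_group_add \<Rightarrow> 'a) \<Rightarrow> ('a \<Rightarrow> 'a \<Rightarrow> 'a) \<Rightarrow> bool" where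
  "HpA p n sm br \<longleftrightarrow>
     (\<exists>\<phi> :: 'a \<Rightarrow> (nat \<Rightarrow> complex).
        (\<forall>u v. \<phi> (u + v) = (\<lambda>i. \<phi> u i + \<phi> v i))
      \<and> (\<forall>c u. \<phi> (sm c u) = (\<lambda>i. c * \<phi> u i))
      \<and> (\<forall>u v. \<phi> (br u v) = heis_br p (\<phi> u) (\<phi> v))
      \<and> range \<phi> = heis_carrier p
      \<and> {u. \<phi> u = (\<lambda>_. 0)} = NP sm br)
   \<and> (\<forall>u\<in>NP sm br. \<forall>v\<in>NP sm br. br u v = 0)
   \<and> vector_space.dim sm (NP sm br) = n"

definition lie_iso :: "(complex \<Rightarrow> 'a::ab_group_add \<Rightarrow> 'a) \<Rightarrow> ('a \<Rightarrow> 'a \<Rightarrow> 'a)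
    \<Rightarrow> (complex \<Rightarrow> 'b::ab_group_add \<Rightarrow> 'b) \<Rightarrow> ('b \<Rightarrow> 'b \<Rightarrow> 'b) \<Rightarrow> ('a \<Rightarrow> 'b) \<Rightarrow> bool" where
  "lie_iso sm1 br1 sm2 br2 f \<longleftrightarrow> Vector_Spaces.linear sm1 sm2 f \<and> bij f
     \<and> (\<forall>u v. f (br1 u v) = br2 (f u) (f v))"

end

theory Submission
  imports Defs
begin

definition vadd :: "(nat\<Rightarrow>complex) \<Rightarrow> (nat\<Rightarrow>complex) \<Rightarrow> (nat\<Rightarrow>complex)" where
  "vadd u v = (\<lambda>i. u i + v i)"
definition vsc :: "complex \<Rightarrow> (nat\<Rightarrow>complex) \<Rightarrow> (nat\<Rightarrow>complex)" where
  "vsc c u = (\<lambda>i. c * u i)"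
definition ev :: "nat \<Rightarrow> nat \<Rightarrow> complex" where
  "ev c = (\<lambda>i. if i = c then 1 else 0)"
definition om :: "nat \<Rightarrow> (nat\<Rightarrow>complex) \<Rightarrow> (nat\<Rightarrow>complex) \<Rightarrow> complex" where
  "om p u v = (\<Sum>l\<in>{1..p}. u (2*l-1) * v (2*l) - u (2*l) * v (2*l-1))"
definition Jf :: "nat \<Rightarrow> nat \<Rightarrow> complex" where
  "Jf a b = (if odd a \<and> b = a + 1 then 1 else if odd b \<and> a = b + 1 then -1 else 0)"

lemma heis_br_om: "heis_br p u v = vsc (om p u v) (ev (2*p+1))"
  by (auto simp: heis_br_def vsc_def ev_def om_def fun_eq_iff)

lemma om_add1[simp]: "om p (vadd u v) w = om p u w + om p v w"
  by (simp add: om_def vadd_def sum.distrib[symmetric] algebra_simps)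
lemma om_add2[simp]: "om p w (vadd u v) = om p w u + om p w v"
  by (simp add: om_def vadd_def sum.distrib[symmetric] algebra_simps)
lemma om_sc1[simp]: "om p (vsc c u) w = c * om p u w"
  by (simp add: om_def vsc_def sum_distrib_left algebra_simps)
lemma om_sc2[simp]: "om p w (vsc c u) = c * om p w u"
  by (simp add: om_def vsc_def sum_distrib_left algebra_simps)
lemma om_anti: "om p u v = - om p v u"
  by (simp add: om_def sum_negf[symmetric] algebra_simps)
lemma om_self[simp]: "om p u u = 0"
  using om_anti[of p u u] by simp

lemma om_ev_in:
  assumes "c \<in> {1..2*p}"
  shows "om p u (ev c) = (if even c then u (c-1) else - u (c+1))"
proof (cases "even c")
  case True
  then obtain k where k: "c = 2*k" by blast
  with assms have kp: "k \<in> {1..p}" by auto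
  have "om p u (ev c) = (\<Sum>l\<in>{1..p}. if l = k then u (2*l-1) else 0)"
    unfolding om_def ev_def by (rule sum.cong) (auto simp: k)
  also have "\<dots> = u (c-1)" using kp k by simp
  finally show ?thesis using True by simp
next
  case False
  then obtain k0 where "c = 2*k0 + 1" by (blast elim: oddE)
  then obtain k where k: "c = 2*k - 1" "k \<ge> 1" by (intro that[of "k0+1"]) auto
  with assms have kp: "k \<in> {1..p}" by auto
  have "om p u (ev c) = (\<Sum>l\<in>{1..p}. if l = k then - u (2*l) else 0)"
    unfolding om_def ev_def by (rule sum.cong) (auto simp: k)
  also have "\<dots> = - u (c+1)" using kp k by simp
  finally show ?thesis using False by simp
qed

lemma om_ev_out:
  assumes "c \<notin> {1..2*p}"
  shows "om p u (ev c) = 0"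
  unfolding om_def ev_def using assms by (intro sum.neutral) auto

lemma om_ev_ev:
  assumes "a \<le> 2*p+1" "b \<le> 2*p+1"
  shows "om p (ev a) (ev b) = Jf a b"
proof (cases "b \<in> {1..2*p}")
  case True
  then show ?thesis using om_ev_in[OF True] by (auto simp: ev_def Jf_def)
next
  case False
  then show ?thesis using om_ev_out[OF False] assms by (auto simp: Jf_def; presburger)
qed


lemma car_vadd[simp]: "u \<in> heis_carrier p \<Longrightarrow> v \<in> heis_carrier p \<Longrightarrow> vadd u v \<in> heis_carrier p"
  by (auto simp: heis_carrier_def vadd_def)
lemma car_vsc[simp]: "u \<in> heis_carrier p \<Longrightarrow> vsc c u \<in> heis_carrier p"
  by (auto simp: heis_carrier_def vsc_def)
lemma car_ev[simp]: "c \<in> {1..2*p+1} \<Longrightarrow> ev c \<in> heis_carrier p"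
  by (auto simp: heis_carrier_def ev_def)
lemma car_heis_br[simp]: "heis_br p u v \<in> heis_carrier p"
  by (auto simp: heis_carrier_def heis_br_def)
lemma car_zero[simp]: "(\<lambda>_. 0) \<in> heis_carrier p"
  by (auto simp: heis_carrier_def)

definition restr :: "(nat \<Rightarrow> complex) \<Rightarrow> nat set \<Rightarrow> nat \<Rightarrow> complex" where
  "restr h C = (\<lambda>i. if i \<in> C then h i else 0)"

lemma car_restr[simp]: "C \<subseteq> {1..2*p+1} \<Longrightarrow> restr h C \<in> heis_carrier p"
  by (auto simp: heis_carrier_def restr_def)

lemma lin_expand:
  fixes F :: "(nat\<Rightarrow>complex) \<Rightarrow> 'b::ab_group_add" and sc :: "complex \<Rightarrow> 'b \<Rightarrow> 'b"
  assumes add: "\<And>u v. u \<in> heis_carrier p \<Longrightarrow> v \<in> heis_carrier p \<Longrightarrow> F (vadd u v) = F u + F v"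
    and scl: "\<And>c u. u \<in> heis_carrier p \<Longrightarrow> F (vsc c u) = sc c (F u)"
    and zero: "F (\<lambda>_. 0) = 0"
    and h: "h \<in> heis_carrier p"
  shows "F h = (\<Sum>c\<in>{1..2*p+1}. sc (h c) (F (ev c)))"
proof -
  have "C \<subseteq> {1..2*p+1} \<Longrightarrow> F (restr h C) = (\<Sum>c\<in>C. sc (h c) (F (ev c)))" for C
  proof (induction C rule: infinite_finite_induct)
    case (infinite A)
    then show ?case using finite_subset by blast
  next
    case empty
    then show ?case using zero by (simp add: restr_def)
  next
    case (insert c C)
    have e: "restr h (insert c C) = vadd (vsc (h c) (ev c)) (restr h C)"
      using insert by (auto simp: restr_def vadd_def vsc_def ev_def fun_eq_iff)
    show ?case using insert unfolding e
      by (subst add) (auto simp: scl)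
  qed
  moreover have "restr h {1..2*p+1} = h" using h by (auto simp: restr_def heis_carrier_def fun_eq_iff)
  ultimately show ?thesis by (metis order_refl)
qed


locale hpa1 =
  fixes sm :: "complex \<Rightarrow> 'a::ab_group_add \<Rightarrow> 'a" and br :: "'a \<Rightarrow> 'a \<Rightarrow> 'a"
    and p :: nat and \<phi> :: "'a \<Rightarrow> nat \<Rightarrow> complex"
  assumes p1: "1 \<le> p" and lie: "lie_algebra sm br"
    and phi_add: "\<And>u v. \<phi> (u + v) = vadd (\<phi> u) (\<phi> v)"
    and phi_sc: "\<And>c u. \<phi> (sm c u) = vsc c (\<phi> u)"
    and phi_br: "\<And>u v. \<phi> (br u v) = heis_br p (\<phi> u) (\<phi> v)"
    and phi_range: "range \<phi> = heis_carrier p"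
    and phi_ker: "{u. \<phi> u = (\<lambda>_. 0)} = NP sm br"
    and np_dim: "vector_space.dim sm (NP sm br) = 1"
begin

sublocale vector_space sm using lie by (simp add: lie_algebra_def)

lemma br_addl: "br (x + y) z = br x z + br y z" using lie by (simp add: lie_algebra_def)
lemma br_addr: "br x (y + z) = br x y + br x z" using lie by (simp add: lie_algebra_def)
lemma br_scl[simp]: "br (sm c x) y = sm c (br x y)" using lie by (simp add: lie_algebra_def)
lemma br_scr[simp]: "br x (sm c y) = sm c (br x y)" using lie by (simp add: lie_algebra_def)
lemma br_self[simp]: "br x x = 0" using lie by (simp add: lie_algebra_def)
lemma jacobi: "br x (br y z) + br y (br z x) + br z (br x y) = 0" using lie by (simp add: lie_algebra_def)

lemma br_0l[simp]: "br 0 x = 0" using br_addl[of 0 0 x] by simp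
lemma br_0r[simp]: "br x 0 = 0" using br_addr[of x 0 0] by simp
lemma br_anti: "br x y = - br y x"
proof -
  have "br x y + br y x = 0" using br_self[of "x+y"] unfolding br_addl br_addr by (simp add: add.commute)
  then show ?thesis by (simp add: eq_neg_iff_add_eq_0)
qed
lemma br_negl[simp]: "br (- x) y = - br x y" using br_addl[of x "-x" y] by (simp add: add_eq_0_iff)
lemma br_negr[simp]: "br x (- y) = - br x y" using br_addr[of x y "-y"] by (simp add: add_eq_0_iff)
lemma br_diffl: "br (x - y) z = br x z - br y z" using br_addl[of x "-y" z] by simp
lemma br_diffr: "br x (y - z) = br x y - br x z" using br_addr[of x y "-z"] by simp
lemma deriv: "br a (br u v) = br (br a u) v + br u (br a v)"
proof -
  have j: "br a (br u v) + - br u (br a v) + - br (br a u) v = 0"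
    using jacobi[of a u v] br_anti[of v a] br_anti[of v "br a u"] by simp
  then have "br a (br u v) - br u (br a v) = br (br a u) v" by simp
  then show ?thesis by (simp add: diff_eq_eq)
qed

lemma phi0[simp]: "\<phi> 0 = (\<lambda>_. 0)" using phi_sc[of 0 0] by (simp add: vsc_def)
lemma phi_neg: "\<phi> (- u) = (\<lambda>i. - \<phi> u i)" using phi_sc[of "-1" u] by (simp add: vsc_def)
lemma phi_diff: "\<phi> (u - v) = (\<lambda>i. \<phi> u i - \<phi> v i)"
  using phi_add[of u "-v"] by (simp add: phi_neg vadd_def)

abbreviation "I \<equiv> NP sm br"
lemma mem_I: "u \<in> I \<longleftrightarrow> \<phi> u = (\<lambda>_. 0)" using phi_ker by blast

lemma subspace_I: "subspace I"
  by (rule subspaceI) (auto simp: mem_I phi_add phi_sc vadd_def vsc_def)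

lemma phi_in_car[simp]: "\<phi> u \<in> heis_carrier p" using phi_range by blast

lemma y_exists: "\<exists>y. y \<noteq> 0 \<and> I = span {y}"
proof -
  obtain B where B: "B \<subseteq> I" "independent B" "I \<subseteq> span B" "card B = dim I"
    using basis_exists by blast
  have "card B = 1" using B(4) np_dim by simp
  then obtain y where y: "B = {y}" by (rule card_1_singletonE)
  have "y \<noteq> 0" using B(2) y by simp
  moreover have "span {y} \<subseteq> I" using B y subspace_I by (simp add: span_minimal)
  ultimately show ?thesis using B y by blast
qed

definition y where "y = (SOME y. y \<noteq> 0 \<and> I = span {y})"
lemma y_nz[simp]: "y \<noteq> 0" and I_span: "I = span {y}"
  using someI_ex[OF y_exists] unfolding y_def by auto

lemma mem_I_y: "u \<in> I \<longleftrightarrow> (\<exists>c. u = sm c y)"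
  using I_span span_singleton by auto

lemma phi_y[simp]: "\<phi> y = (\<lambda>_. 0)" using mem_I_y[of y] mem_I by (metis scale_one)

lemma br_y_in_I: "br u y \<in> I"
  by (simp add: mem_I phi_br heis_br_def fun_eq_iff om_def)

definition lam where "lam u = (SOME c. br u y = sm c y)"
lemma lam: "br u y = sm (lam u) y"
  using br_y_in_I[of u] mem_I_y unfolding lam_def by (metis (mono_tags) someI_ex)

lemma lam_unique: "br u y = sm c y \<Longrightarrow> lam u = c"
  using lam[of u] by simp

lemma lam_add: "lam (u + v) = lam u + lam v"
  by (rule lam_unique) (unfold br_addl lam[of u] lam[of v], simp add: scale_left_distrib)
lemma lam_sc: "lam (sm c u) = c * lam u"
  by (rule lam_unique) (unfold br_scl lam[of u], simp)
lemma lam_br: "lam (br u v) = 0"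
proof (rule lam_unique)
  have "br (br u v) y = - br y (br u v)" by (rule br_anti)
  also have "\<dots> = - (br (br y u) v + br u (br y v))" using deriv[of y u v] by simp
  also have "\<dots> = 0"
    by (simp add: br_anti[of y u] br_anti[of y v] lam[of u] lam[of v] mult.commute)
  finally show "br (br u v) y = sm 0 y" by simp
qed

end

context hpa1 begin

lemma lcs_Suc: "lcs sm br (Suc k) = span {br x w | x w. w \<in> lcs sm br k}" by simp

lemma lcs1_Z: "lcs sm br 1 \<subseteq> {w. \<forall>i. i \<noteq> 2*p+1 \<longrightarrow> \<phi> w i = 0}"
proof -
  have "subspace {w. \<forall>i. i \<noteq> 2*p+1 \<longrightarrow> \<phi> w i = 0}"
    by (rule subspaceI) (auto simp: phi_add phi_sc vadd_def vsc_def)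
  moreover have "{br x w | x w. w \<in> lcs sm br 0} \<subseteq> {w. \<forall>i. i \<noteq> 2*p+1 \<longrightarrow> \<phi> w i = 0}"
    by (auto simp: phi_br heis_br_def)
  ultimately show ?thesis by (simp add: span_minimal)
qed

lemma lcs2_I: "lcs sm br 2 \<subseteq> I"
proof -
  have "{br x w | x w. w \<in> lcs sm br 1} \<subseteq> I"
  proof clarify
    fix x w assume "w \<in> lcs sm br 1"
    then have w: "\<forall>i. i \<noteq> 2*p+1 \<longrightarrow> \<phi> w i = 0" using lcs1_Z by blast
    have "om p (\<phi> x) (\<phi> w) = 0" unfolding om_def
      by (rule sum.neutral) (use w in auto)
    then show "br x w \<in> I" by (simp add: mem_I phi_br heis_br_om vsc_def fun_eq_iff)
  qed
  then show ?thesis using subspace_I by (simp add: numeral_2_eq_2 span_minimal)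
qed

lemma ex_a: "\<exists>a. lam a = 1"
proof (rule ccontr)
  assume na: "\<not> ?thesis"
  have l0: "lam x = 0" for x
  proof (rule ccontr)
    assume "lam x \<noteq> 0"
    then have "lam (sm (1 / lam x) x) = 1" by (simp add: lam_sc)
    then show False using na by blast
  qed
  have "y \<in> I" by (simp add: I_span span_base)
  then have y3: "y \<in> lcs sm br 3" unfolding NP_def by (rule INT_D) simp
  have "{br x w | x w. w \<in> lcs sm br 2} \<subseteq> {0}"
  proof clarify
    fix x w assume "w \<in> lcs sm br 2"
    then obtain c where "w = sm c y" using lcs2_I mem_I_y by blast
    then show "br x w = 0" by (simp add: lam l0)
  qed
  then have "span {br x w | x w. w \<in> lcs sm br 2} \<subseteq> {0}"
    by (simp add: span_minimal)
  moreover have "lcs sm br 3 = span {br x w | x w. w \<in> lcs sm br 2}"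
  proof -
    have "(3::nat) = Suc 2" by simp
    then show ?thesis by (metis lcs_Suc)
  qed
  ultimately have "lcs sm br 3 \<subseteq> {0}" by (simp only:)
  then show False using y3 y_nz by blast
qed

end

context hpa1 begin

definition a where "a = (SOME a. lam a = 1)"
lemma lam_a: "lam a = 1" unfolding a_def using ex_a by (rule someI_ex)
lemma br_a_y[simp]: "br a y = y" using lam[of a] lam_a by simp

definition dd where "dd u = br a (br a u)"

lemma dd_I: "dd u \<in> I"
proof -
  have "om p (\<phi> a) (ev (2*p+1)) = 0" by (rule om_ev_out) auto
  then show ?thesis by (simp add: dd_def mem_I phi_br heis_br_om) (simp add: vsc_def)
qed
lemma phi_dd[simp]: "\<phi> (dd u) = (\<lambda>_. 0)" using dd_I mem_I by blast
lemma dd_y[simp]: "dd (sm c y) = sm c y" by (simp add: dd_def)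
lemma br_a_dd: "br a (dd u) = dd u"
  using dd_I[of u] mem_I_y by auto
lemma dd_dd[simp]: "dd (dd u) = dd u"
  using dd_I[of u] mem_I_y by auto
lemma dd_add: "dd (u + v) = dd u + dd v" by (simp add: dd_def br_addr)
lemma dd_sc: "dd (sm c u) = sm c (dd u)" by (simp add: dd_def)
lemma dd_diff: "dd (u - v) = dd u - dd v" by (simp add: dd_def br_diffr)

lemma dd_br:
  assumes "dd u = 0" "dd v = 0"
  shows "dd (br u v) = 0"
proof -
  have "dd (br u v) = br (dd u) v + br (br a u) (br a v) + (br (br a u) (br a v) + br u (dd v))"
    unfolding dd_def deriv[of a u v] br_addr deriv[of a "br a u" v] deriv[of a u "br a v"] ..
  then have "dd (br u v) = br (br a u) (br a v) + br (br a u) (br a v)"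
    using assms by simp
  moreover have "br a (br (br a u) (br a v)) = br (dd u) (br a v) + br (br a u) (dd v)"
    unfolding dd_def deriv[of a "br a u" "br a v"] ..
  then have "br a (br (br a u) (br a v)) = 0" using assms by simp
  ultimately have "br a (dd (br u v)) = 0" by (simp add: br_addr)
  then show ?thesis by (simp add: br_a_dd)
qed

lemma S_inj:
  assumes "dd u = 0" "dd v = 0" "\<phi> u = \<phi> v"
  shows "u = v"
proof -
  have "u - v \<in> I" using assms(3) by (simp add: mem_I phi_diff)
  then obtain c where c: "u - v = sm c y" using mem_I_y by blast
  have "dd (u - v) = 0" using assms by (simp add: dd_diff)
  then have "sm c y = 0" using c by simp
  then show ?thesis using c by simp
qed

definition s where "s h = (let u = (SOME u. \<phi> u = h) in u - dd u)"

lemma s_props: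
  assumes "h \<in> heis_carrier p"
  shows "\<phi> (s h) = h" "dd (s h) = 0"
proof -
  obtain u where "\<phi> u = h" using assms phi_range by (metis rangeE)
  then have u: "\<phi> (SOME u. \<phi> u = h) = h" by (rule someI)
  show "\<phi> (s h) = h" using u by (simp add: s_def Let_def phi_diff)
  show "dd (s h) = 0" by (simp add: s_def Let_def dd_diff)
qed

lemma s_unique: "dd u = 0 \<Longrightarrow> s (\<phi> u) = u"
  by (rule S_inj) (simp_all add: s_props)

lemma s_add: "h1 \<in> heis_carrier p \<Longrightarrow> h2 \<in> heis_carrier p \<Longrightarrow> s (vadd h1 h2) = s h1 + s h2"
  by (rule S_inj) (simp_all add: s_props dd_add phi_add)
lemma s_sc: "h \<in> heis_carrier p \<Longrightarrow> s (vsc c h) = sm c (s h)"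
  by (rule S_inj) (simp_all add: s_props dd_sc phi_sc)
lemma s_br: "h1 \<in> heis_carrier p \<Longrightarrow> h2 \<in> heis_carrier p \<Longrightarrow> s (heis_br p h1 h2) = br (s h1) (s h2)"
  by (rule S_inj) (simp_all add: s_props dd_br phi_br)
lemma s_zero: "s (\<lambda>_. 0) = 0"
  using s_unique[of 0] by (simp add: dd_def)

end

definition tau :: "nat \<Rightarrow> nat \<Rightarrow> nat" where "tau lz l = (if l = lz then 1 else l)"
definition rho :: "nat \<Rightarrow> nat \<Rightarrow> nat" where
  "rho lz k = (if odd k then 2 * tau lz ((k+1) div 2) - 1 else 2 * tau lz (k div 2))"

lemma Jf_0: "\<not> (odd a \<and> b = a + 1) \<Longrightarrow> \<not> (odd b \<and> a = b + 1) \<Longrightarrow> Jf a b = 0"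
  unfolding Jf_def by auto
lemma decomp:
  assumes "(k::nat) \<ge> 1"
  obtains x where "x \<ge> 1" "k = 2*x-1" "odd k" "(k+1) div 2 = x"
    | x where "x \<ge> 1" "k = 2*x" "even k" "k div 2 = x"
proof (cases "odd k")
  case True
  then obtain q where "k = 2*q+1" by (blast elim: oddE)
  then show ?thesis using that(1)[of "q+1"] by auto
next
  case False
  then obtain q where "k = 2*q" by (blast elim: evenE)
  then show ?thesis using that(2)[of q] assms False by auto
qed

lemma Jf_char:
  assumes "a \<ge> 1" "b \<ge> 1"
  shows "Jf a b = (if (a+1) div 2 = (b+1) div 2 \<and> odd a \<and> even b then 1
     else if (a+1) div 2 = (b+1) div 2 \<and> even a \<and> odd b then -1 else 0)"
proof -
  have 1: "(odd a \<and> b = a+1) \<longleftrightarrow> ((a+1) div 2 = (b+1) div 2 \<and> odd a \<and> even b)" using assms by presburger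
  have 2: "(odd b \<and> a = b+1) \<longleftrightarrow> ((a+1) div 2 = (b+1) div 2 \<and> even a \<and> odd b)" using assms by presburger
  show ?thesis unfolding Jf_def 1 2 ..
qed

lemma tau_pos: "x \<ge> 1 \<Longrightarrow> tau lz x \<ge> 1" by (auto simp: tau_def)

lemma rho_props:
  assumes "k \<ge> 1"
  shows "rho lz k \<ge> 1" "odd (rho lz k) \<longleftrightarrow> odd k" "(rho lz k + 1) div 2 = tau lz ((k+1) div 2)"
proof -
  have "(k+1) div 2 \<ge> 1" using assms by auto
  then have t: "tau lz ((k+1) div 2) \<ge> 1" by (rule tau_pos)
  have t2: "k div 2 = (k+1) div 2" if "even k" using that by presburger
  show "rho lz k \<ge> 1" "odd (rho lz k) \<longleftrightarrow> odd k" "(rho lz k + 1) div 2 = tau lz ((k+1) div 2)"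
    using t t2 by (auto simp: rho_def)
qed

lemma tau_range: "x \<in> {2..p} \<Longrightarrow> lz \<le> p \<Longrightarrow> tau lz x \<in> {1..p}" by (auto simp: tau_def)

lemma rho_range:
  assumes "lz \<in> {1..p}" "k \<in> {3..2*p}"
  shows "rho lz k \<in> {1..2*p}"
proof -
  have "(k+1) div 2 \<in> {2..p}" using assms by auto
  then have "tau lz ((k+1) div 2) \<in> {1..p}" using tau_range[of "(k+1) div 2" p lz] assms by auto
  then have "(rho lz k + 1) div 2 \<le> p" using rho_props(3)[of k lz] assms by auto
  then show ?thesis using rho_props(1)[of k lz] assms by auto
qed

lemma tau_ne: "x \<ge> 2 \<Longrightarrow> tau lz x \<noteq> lz" by (auto simp: tau_def)
lemma tau_inj: "x \<ge> 2 \<Longrightarrow> x' \<ge> 2 \<Longrightarrow> tau lz x = tau lz x' \<longleftrightarrow> x = x'"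
  by (auto simp: tau_def)

lemma rho_J1:
  assumes "j \<in> {1..2*p}" "k \<in> {3..2*p}"
  shows "Jf (rho ((j+1) div 2) k) j = 0"
proof -
  have k1: "k \<ge> 1" "j \<ge> 1" "(k+1) div 2 \<ge> 2" using assms by auto
  then have "(rho ((j+1) div 2) k + 1) div 2 \<noteq> (j+1) div 2"
    unfolding rho_props(3)[OF k1(1)] using tau_ne by blast
  then show ?thesis unfolding Jf_char[OF rho_props(1)[OF k1(1)] k1(2)] by simp
qed

lemma rho_J2:
  assumes "j \<in> {1..2*p}" "k \<in> {3..2*p}"
  shows "Jf j (rho ((j+1) div 2) k) = 0"
proof -
  have k1: "k \<ge> 1" "j \<ge> 1" "(k+1) div 2 \<ge> 2" using assms by auto
  then have "(rho ((j+1) div 2) k + 1) div 2 \<noteq> (j+1) div 2"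
    unfolding rho_props(3)[OF k1(1)] using tau_ne by blast
  then have "(j+1) div 2 \<noteq> (rho ((j+1) div 2) k + 1) div 2" by metis
  then show ?thesis unfolding Jf_char[OF k1(2) rho_props(1)[OF k1(1)]] by simp
qed

lemma rho_J3:
  assumes "k \<in> {3..2*p}" "k' \<in> {3..2*p}"
  shows "Jf (rho lz k) (rho lz k') = Jf k k'"
proof -
  have k1: "k \<ge> 1" "k' \<ge> 1" "(k+1) div 2 \<ge> 2" "(k'+1) div 2 \<ge> 2" using assms by auto
  then have e: "(rho lz k + 1) div 2 = (rho lz k' + 1) div 2 \<longleftrightarrow> (k+1) div 2 = (k'+1) div 2"
    unfolding rho_props(3)[OF k1(1)] rho_props(3)[OF k1(2)] using tau_inj by blast
  have o: "even (rho lz k) \<longleftrightarrow> even k" "even (rho lz k') \<longleftrightarrow> even k'"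
    using rho_props(2)[OF k1(1), of lz] rho_props(2)[OF k1(2), of lz] by blast+
  show ?thesis
    unfolding Jf_char[OF rho_props(1)[OF k1(1)] rho_props(1)[OF k1(2)]] Jf_char[OF k1(1) k1(2)] e o ..
qed


context hpa1 begin

lemma lam_0[simp]: "lam 0 = 0" by (rule lam_unique) simp
lemma lam_y[simp]: "lam y = 0" by (rule lam_unique) simp
lemma lam_I: "u \<in> I \<Longrightarrow> lam u = 0" using mem_I_y lam_sc by auto
lemma lam_diff: "lam (u - v) = lam u - lam v"
  using lam_add[of "u - v" v] by simp

definition m where "m c = lam (s (ev c))"
definition g where "g = (\<lambda>i. if i \<in> {1..2*p} then (if odd i then m (i+1) else - m (i-1)) else 0)"

lemma car_g[simp]: "g \<in> heis_carrier p" by (auto simp: g_def heis_carrier_def)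

lemma ev_top: "ev (2*p+1) = heis_br p (ev 1) (ev 2)"
proof -
  have "om p (ev 1) (ev 2) = Jf 1 2" using p1 by (intro om_ev_ev) auto
  then show ?thesis by (simp add: heis_br_om Jf_def vsc_def)
qed

lemma m_top[simp]: "m (2*p+1) = 0"
proof -
  have "s (ev (2*p+1)) = br (s (ev 1)) (s (ev 2))" unfolding ev_top using p1 by (intro s_br) auto
  then show ?thesis by (simp add: m_def lam_br)
qed

lemma om_g_ev: "c \<in> {1..2*p+1} \<Longrightarrow> om p g (ev c) = m c"
proof -
  assume c: "c \<in> {1..2*p+1}"
  show ?thesis
  proof (cases "c = 2*p+1")
    case True
    have "om p g (ev c) = 0" by (rule om_ev_out) (use True in auto)
    with True m_top show ?thesis by simp
  next
    case False
    then have c2: "c \<in> {1..2*p}" using c by auto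
    show ?thesis
    proof (cases "even c")
      case True
      then have "c \<noteq> 1" by auto
      then have "c - 1 \<in> {1..2*p}" "odd (c - 1)" "c - 1 + 1 = c" using c2 True by auto
      then show ?thesis using om_ev_in[OF c2] True by (simp add: g_def)
    next
      case False
      then have "c \<noteq> 2*p" by auto
      then have "c + 1 \<in> {1..2*p}" "even (c + 1)" using c2 False by auto
      then show ?thesis using om_ev_in[OF c2] False by (simp add: g_def)
    qed
  qed
qed

lemma om_ev_g: "c \<in> {1..2*p+1} \<Longrightarrow> om p (ev c) g = - m c"
  using om_g_ev om_anti by (metis minus_minus)

lemma mu_om:
  assumes h: "h \<in> heis_carrier p"
  shows "lam (s h) = om p g h"
proof -
  have "lam (s h) = (\<Sum>c\<in>{1..2*p+1}. h c * lam (s (ev c)))"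
    by (rule lin_expand[where F="\<lambda>h. lam (s h)"]) (auto simp: s_add lam_add s_sc lam_sc s_zero h)
  moreover have "om p g h = (\<Sum>c\<in>{1..2*p+1}. h c * om p g (ev c))"
    by (rule lin_expand[where F="om p g"]) (simp_all add: h om_def[of p g "\<lambda>_. 0"])
  ultimately show ?thesis by (simp add: om_g_ev m_def)
qed

lemma ex_j: "\<exists>j\<in>{1..2*p}. m j \<noteq> 0"
proof (rule ccontr)
  assume "\<not> ?thesis"
  then have m0: "\<And>j. j \<in> {1..2*p} \<Longrightarrow> m j = 0" by blast
  have "g = (\<lambda>_. 0)"
  proof
    fix i
    show "g i = 0"
    proof (cases "i \<in> {1..2*p}")
      case True
      show ?thesis
      proof (cases "odd i")
        case True
        then have "i \<noteq> 2*p" by auto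
        then have "i + 1 \<in> {1..2*p}" using \<open>i \<in> {1..2*p}\<close> by auto
        then show ?thesis using True m0 by (simp add: g_def)
      next
        case False
        then have "i \<noteq> 1" by auto
        then have "i - 1 \<in> {1..2*p}" using \<open>i \<in> {1..2*p}\<close> by auto
        then show ?thesis using False m0 by (simp add: g_def)
      qed
    qed (auto simp: g_def)
  qed
  then have "om p g (\<phi> a) = 0" by (simp add: om_def)
  moreover have "a - s (\<phi> a) \<in> I" by (simp add: mem_I phi_diff s_props)
  then have "lam (s (\<phi> a)) = 1" using lam_I lam_diff lam_a by (metis eq_iff_diff_eq_0)
  ultimately show False using mu_om[of "\<phi> a"] by simp
qed

definition j where "j = (SOME j. j \<in> {1..2*p} \<and> m j \<noteq> 0)"
lemma j_props: "j \<in> {1..2*p} \<and> m j \<noteq> 0"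
  unfolding j_def by (rule someI_ex) (use ex_j in blast)
lemma j_range: "j \<in> {1..2*p}" and mj: "m j \<noteq> 0" using j_props by auto

definition lz where "lz = (j+1) div 2"
lemma lz_range: "lz \<in> {1..p}" using j_range by (auto simp: lz_def)

definition f where "f k = (if k = 1 then vsc (1 / m j) (ev j) else if k = 2 then vsc (-1) g
   else if k = 2*p+1 then ev (2*p+1) else vadd (ev (rho lz k)) (vsc (- (m (rho lz k) / m j)) (ev j)))"

lemma f1: "f 1 = vsc (1 / m j) (ev j)" using p1 by (simp add: f_def)
lemma f2: "f 2 = vsc (-1) g" using p1 by (simp add: f_def)
lemma ftop: "f (2*p+1) = ev (2*p+1)" using p1 by (simp add: f_def)
lemma fmid: "k \<in> {3..2*p} \<Longrightarrow> f k = vadd (ev (rho lz k)) (vsc (- (m (rho lz k) / m j)) (ev j))"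
  by (simp add: f_def)

lemma f_cases: "q \<in> {1..2*p+1} \<Longrightarrow> q = 1 \<or> q = 2 \<or> q = 2*p+1 \<or> q \<in> {3..2*p}"
  using p1 by auto

lemma rr: "k \<in> {3..2*p} \<Longrightarrow> rho lz k \<in> {1..2*p}" using rho_range lz_range by blast

lemma car_f:
  assumes "q \<in> {1..2*p+1}" shows "f q \<in> heis_carrier p"
proof -
  have jj: "j \<in> {1..2*p+1}" using j_range by auto
  consider "q = 1" | "q = 2" | "q = 2*p+1" | "q \<in> {3..2*p}" using f_cases[OF assms] by blast
  then show ?thesis
  proof cases
    case 1 then show ?thesis unfolding 1 f1 using jj by simp
  next
    case 2 then show ?thesis unfolding 2 f2 by simp
  next
    case 3 then show ?thesis unfolding 3 ftop by simp
  next
    case 4 then show ?thesis unfolding fmid[OF 4] using jj rr[OF 4] by simp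
  qed
qed

end

context hpa1 begin

lemma jj: "Suc 0 \<le> j" "j \<le> 2*p" using j_range by auto
lemma Jf_same[simp]: "Jf x x = 0" by (simp add: Jf_def)
lemma Jf12: "Jf (Suc 0) 2 = 1" by (simp add: Jf_def)
lemma Jf21: "Jf 2 (Suc 0) = -1" by (simp add: Jf_def)
lemma Jf_1k: "3 \<le> k \<Longrightarrow> Jf (Suc 0) k = 0" by (simp add: Jf_def)
lemma Jf_k1: "3 \<le> k \<Longrightarrow> Jf k (Suc 0) = 0" by (simp add: Jf_def)
lemma Jf_2k: "3 \<le> k \<Longrightarrow> Jf 2 k = 0" by (simp add: Jf_def)
lemma Jf_k2: "3 \<le> k \<Longrightarrow> Jf k 2 = 0" by (simp add: Jf_def)
lemma Jf_topr: "x \<le> 2*p \<Longrightarrow> Jf x (Suc (2*p)) = 0" by (auto simp: Jf_def)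
lemma Jf_topl: "x \<le> 2*p \<Longrightarrow> Jf (Suc (2*p)) x = 0" by (auto simp: Jf_def)
lemma rJ1: "3 \<le> k \<Longrightarrow> k \<le> 2*p \<Longrightarrow> Jf (rho lz k) j = 0" unfolding lz_def by (rule rho_J1[OF j_range]) auto
lemma rJ2: "3 \<le> k \<Longrightarrow> k \<le> 2*p \<Longrightarrow> Jf j (rho lz k) = 0" unfolding lz_def by (rule rho_J2[OF j_range]) auto
lemma rJ3: "3 \<le> k \<Longrightarrow> k \<le> 2*p \<Longrightarrow> 3 \<le> k' \<Longrightarrow> k' \<le> 2*p \<Longrightarrow> Jf (rho lz k) (rho lz k') = Jf k k'"
  by (rule rho_J3) auto
lemma rr2: "3 \<le> k \<Longrightarrow> k \<le> 2*p \<Longrightarrow> rho lz k \<le> 2*p" "3 \<le> k \<Longrightarrow> k \<le> 2*p \<Longrightarrow> Suc 0 \<le> rho lz k"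
  using rr by auto
lemma oee: "Suc 0 \<le> x \<Longrightarrow> x \<le> 2*p \<Longrightarrow> Suc 0 \<le> w \<Longrightarrow> w \<le> 2*p \<Longrightarrow> om p (ev x) (ev w) = Jf x w"
  by (rule om_ev_ev) auto
lemma om_topr: "om p u (ev (Suc (2*p))) = 0" by (rule om_ev_out) auto
lemma om_topl: "om p (ev (Suc (2*p))) u = 0" using om_topr om_anti by (metis neg_0_equal_iff_equal)
lemma ogev: "Suc 0 \<le> c \<Longrightarrow> c \<le> 2*p \<Longrightarrow> om p g (ev c) = m c" by (rule om_g_ev) auto
lemma oegv: "Suc 0 \<le> c \<Longrightarrow> c \<le> 2*p \<Longrightarrow> om p (ev c) g = - m c" by (rule om_ev_g) auto
lemma mtop: "m (Suc (2*p)) = 0" using m_top by simp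

lemma om_f:
  assumes "q \<in> {1..2*p+1}" "r \<in> {1..2*p+1}"
  shows "om p (f q) (f r) = Jf q r"
proof -
  have p2: "Suc 0 \<le> p" using p1 by auto
  note SIMPS = jj Jf12 Jf21 Jf_1k Jf_k1 Jf_2k Jf_k2 Jf_topr Jf_topl rJ1 rJ2 rJ3 rr2 oee om_topr om_topl ogev oegv mtop mj p2
  consider (a1) "q = 1" | (a2) "q = 2" | (a3) "q = 2*p+1" | (a4) "q \<in> {3..2*p}" using f_cases[OF assms(1)] by blast
  then show ?thesis
  proof cases
    case a1
    consider (b1) "r = 1" | (b2) "r = 2" | (b3) "r = 2*p+1" | (b4) "r \<in> {3..2*p}" using f_cases[OF assms(2)] by blast
    then show ?thesis
    proof cases
      case b1
      show ?thesis unfolding a1 f1 b1 f1  by (simp add: SIMPS)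
    next
      case b2
      show ?thesis unfolding a1 f1 b2 f2  by (simp add: SIMPS)
    next
      case b3
      show ?thesis unfolding a1 f1 b3 ftop  by (simp add: SIMPS)
    next
      case b4
      show ?thesis unfolding a1 f1 fmid[OF b4] using b4 by (simp add: SIMPS)
    qed
  next
    case a2
    consider (b1) "r = 1" | (b2) "r = 2" | (b3) "r = 2*p+1" | (b4) "r \<in> {3..2*p}" using f_cases[OF assms(2)] by blast
    then show ?thesis
    proof cases
      case b1
      show ?thesis unfolding a2 f2 b1 f1  by (simp add: SIMPS)
    next
      case b2
      show ?thesis unfolding a2 f2 b2 f2  by (simp add: SIMPS)
    next
      case b3
      show ?thesis unfolding a2 f2 b3 ftop  by (simp add: SIMPS)
    next
      case b4
      show ?thesis unfolding a2 f2 fmid[OF b4] using b4 by (simp add: SIMPS)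
    qed
  next
    case a3
    consider (b1) "r = 1" | (b2) "r = 2" | (b3) "r = 2*p+1" | (b4) "r \<in> {3..2*p}" using f_cases[OF assms(2)] by blast
    then show ?thesis
    proof cases
      case b1
      show ?thesis unfolding a3 ftop b1 f1  by (simp add: SIMPS)
    next
      case b2
      show ?thesis unfolding a3 ftop b2 f2  by (simp add: SIMPS)
    next
      case b3
      show ?thesis unfolding a3 ftop b3 ftop  by (simp add: SIMPS)
    next
      case b4
      show ?thesis unfolding a3 ftop fmid[OF b4] using b4 by (simp add: SIMPS)
    qed
  next
    case a4
    consider (b1) "r = 1" | (b2) "r = 2" | (b3) "r = 2*p+1" | (b4) "r \<in> {3..2*p}" using f_cases[OF assms(2)] by blast
    then show ?thesis
    proof cases
      case b1
      show ?thesis unfolding fmid[OF a4] b1 f1 using a4 by (simp add: SIMPS)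
    next
      case b2
      show ?thesis unfolding fmid[OF a4] b2 f2 using a4 by (simp add: SIMPS)
    next
      case b3
      show ?thesis unfolding fmid[OF a4] b3 ftop using a4 by (simp add: SIMPS)
    next
      case b4
      show ?thesis unfolding fmid[OF a4] fmid[OF b4] using a4 b4 by (simp add: SIMPS)
    qed
  qed
qed

end

definition Cc :: "nat \<Rightarrow> nat \<Rightarrow> complex" where
  "Cc i k = (if i = 1 \<and> k = 0 then 1 else if i = 0 \<and> k = 1 then -1 else 0)"

context hpa1 begin

lemma omg_f:
  assumes "q \<in> {1..2*p+1}"
  shows "om p g (f q) = (if q = 1 then 1 else 0)"
proof -
  note SIMPS = jj rr2 ogev om_topr mtop mj
  consider (a1) "q = 1" | (a2) "q = 2" | (a3) "q = 2*p+1" | (a4) "q \<in> {3..2*p}" using f_cases[OF assms(1)] by blast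
  then show ?thesis
  proof cases
    case a1 show ?thesis unfolding a1 f1 by (simp add: SIMPS)
  next
    case a2 show ?thesis unfolding a2 f2 by (simp add: SIMPS)
  next
    case a3 show ?thesis unfolding a3 ftop using p1 by (simp add: SIMPS)
  next
    case a4 show ?thesis unfolding fmid[OF a4] using a4 by (simp add: SIMPS)
  qed
qed

definition z where "z k = (if k = 0 then y else s (f k))"

lemma z0: "z 0 = y" by (simp add: z_def)
lemma zq: "q \<in> {1..2*p+1} \<Longrightarrow> z q = s (f q)" by (simp add: z_def)

lemma rel_xx:
  assumes "q \<in> {1..2*p+1}" "r \<in> {1..2*p+1}"
  shows "br (z q) (z r) = sm (Jf q r) (z (2*p+1))"
proof -
  have T: "2*p+1 \<in> {1..2*p+1}" by simp
  have "br (z q) (z r) = s (heis_br p (f q) (f r))"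
    unfolding zq[OF assms(1)] zq[OF assms(2)] by (rule s_br[symmetric]) (use car_f assms in auto)
  also have "\<dots> = s (vsc (Jf q r) (ev (2*p+1)))" unfolding heis_br_om om_f[OF assms] ..
  also have "\<dots> = sm (Jf q r) (s (ev (2*p+1)))" by (rule s_sc) simp
  also have "s (ev (2*p+1)) = z (2*p+1)" unfolding zq[OF T] ftop ..
  finally show ?thesis .
qed

lemma rel_xy:
  assumes "q \<in> {1..2*p+1}"
  shows "br (z q) y = sm (if q = 1 then 1 else 0) y"
  unfolding zq[OF assms] lam mu_om[OF car_f[OF assms]] omg_f[OF assms] ..

lemma table:
  assumes "i \<in> {0..2*p+1}" "k \<in> {0..2*p+1}"
  shows "br (z i) (z k) = sm (Cc i k) (z 0) + sm (Jf i k) (z (2*p+1))"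
proof (cases "i = 0")
  case True
  note i0 = True
  show ?thesis
  proof (cases "k = 0")
    case True
    then show ?thesis using i0 by (simp add: Cc_def Jf_def)
  next
    case False
    then have k1: "k \<in> {1..2*p+1}" using assms by auto
    have "br (z i) (z k) = - br (z k) y" unfolding i0 z0 by (rule br_anti)
    also have "\<dots> = sm (Cc i k) (z 0)" unfolding rel_xy[OF k1] using i0 False
      by (cases "k = 1") (simp_all add: Cc_def z0)
    finally show ?thesis using i0 False by (simp add: Jf_def)
  qed
next
  case False
  then have i1: "i \<in> {1..2*p+1}" using assms by auto
  show ?thesis
  proof (cases "k = 0")
    case True
    have "br (z i) (z k) = sm (Cc i k) (z 0)" unfolding True z0 rel_xy[OF i1] using False
      by (simp add: Cc_def)
    then show ?thesis using True by (simp add: Jf_def)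
  next
    case k0: False
    then have k1: "k \<in> {1..2*p+1}" using assms by auto
    show ?thesis unfolding rel_xx[OF i1 k1] using False k0 by (simp add: Cc_def)
  qed
qed

end

context hpa1 begin

lemma phi_sum: "finite A \<Longrightarrow> \<phi> (\<Sum>i\<in>A. sm (c i) (w i)) = (\<lambda>x. \<Sum>i\<in>A. c i * \<phi> (w i) x)"
  by (induction A rule: finite_induct) (auto simp: phi_add phi_sc vadd_def vsc_def)

lemma om_zero2[simp]: "om p u (\<lambda>_. 0) = 0" by (simp add: om_def)

lemma om_sum2: "finite A \<Longrightarrow> om p u (\<lambda>x. \<Sum>i\<in>A. c i * w i x) = (\<Sum>i\<in>A. c i * om p u (w i))"
proof (induction A rule: finite_induct)
  case empty then show ?case by simp
next
  case (insert a A)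
  have "(\<lambda>x. \<Sum>i\<in>insert a A. c i * w i x) = vadd (vsc (c a) (w a)) (\<lambda>x. \<Sum>i\<in>A. c i * w i x)"
    using insert by (simp add: vadd_def vsc_def fun_eq_iff)
  then show ?case using insert by simp
qed

lemma phi_z: "q \<in> {1..2*p+1} \<Longrightarrow> \<phi> (z q) = f q" using zq s_props car_f by simp
lemma phi_z0: "\<phi> (z 0) = (\<lambda>_. 0)" by (simp add: z0)

lemma fT:
  assumes "q \<in> {1..2*p+1}"
  shows "f q (2*p+1) = (if q = 2*p+1 then 1 else 0)"
proof -
  have jT: "j \<noteq> 2*p+1" using jj by auto
  consider (a1) "q = 1" | (a2) "q = 2" | (a3) "q = 2*p+1" | (a4) "q \<in> {3..2*p}" using f_cases[OF assms(1)] by blast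
  then show ?thesis
  proof cases
    case a1 show ?thesis unfolding a1 f1 using jT p1 by (simp add: vsc_def ev_def)
  next
    case a2 show ?thesis unfolding a2 f2 using p1 by (simp add: vsc_def g_def)
  next
    case a3 show ?thesis unfolding a3 ftop by (simp add: ev_def)
  next
    case a4 show ?thesis unfolding fmid[OF a4] using a4 jT rr2[of q] by (simp add: vsc_def vadd_def ev_def)
  qed
qed

definition kp :: "nat \<Rightarrow> nat" where "kp k = (if odd k then k + 1 else k - 1)"

lemma kp_range: "k \<in> {1..2*p} \<Longrightarrow> kp k \<in> {1..2*p}"
  unfolding kp_def by (cases "odd k") (auto, presburger+)

lemma kp_J: "k \<in> {1..2*p} \<Longrightarrow> i \<noteq> k \<Longrightarrow> Jf (kp k) i = 0"
  unfolding kp_def Jf_def by (cases "odd k") (auto, presburger+)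

lemma kp_Jk: assumes "k \<in> {1..2*p}" shows "Jf (kp k) k \<noteq> 0"
proof (cases "odd k")
  case True then show ?thesis by (simp add: kp_def Jf_def)
next
  case False
  have k0: "k \<noteq> 0" using assms by auto
  have "odd (k - 1)" using False k0 by presburger
  moreover have "k - 1 + 1 = k" using k0 by simp
  ultimately show ?thesis using False by (simp add: kp_def Jf_def)
qed

lemma indep_fam:
  assumes v: "(\<Sum>i\<in>{0..2*p+1}. sm (c i) (z i)) = 0"
  shows "\<forall>i\<in>{0..2*p+1}. c i = 0"
proof -
  have "(\<lambda>x. \<Sum>i\<in>{0..2*p+1}. c i * \<phi> (z i) x) = \<phi> (\<Sum>i\<in>{0..2*p+1}. sm (c i) (z i))"
    by (rule phi_sum[symmetric]) simp
  also have "\<dots> = \<phi> 0" unfolding v ..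
  finally have pv: "(\<lambda>x. \<Sum>i\<in>{0..2*p+1}. c i * \<phi> (z i) x) = (\<lambda>_. 0)" by simp
  have ck: "c k = 0" if k: "k \<in> {1..2*p}" for k
  proof -
    have "0 = om p (f (kp k)) (\<lambda>x. \<Sum>i\<in>{0..2*p+1}. c i * \<phi> (z i) x)" unfolding pv by simp
    also have "\<dots> = (\<Sum>i\<in>{0..2*p+1}. c i * om p (f (kp k)) (\<phi> (z i)))" by (rule om_sum2) simp
    also have "\<dots> = (\<Sum>i\<in>{0..2*p+1}. if i = k then c k * Jf (kp k) k else 0)"
    proof (rule sum.cong)
      fix i assume i: "i \<in> {0..2*p+1}"
      show "c i * om p (f (kp k)) (\<phi> (z i)) = (if i = k then c k * Jf (kp k) k else 0)"
      proof (cases "i = 0")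
        case True then show ?thesis using k by (simp add: phi_z0)
      next
        case False
        then have i1: "i \<in> {1..2*p+1}" using i by auto
        have kk: "kp k \<in> {1..2*p+1}" using kp_range[OF k] by auto
        show ?thesis unfolding phi_z[OF i1] om_f[OF kk i1] using kp_J[OF k] by auto
      qed
    qed simp
    also have "\<dots> = c k * Jf (kp k) k" using k by simp
    finally show ?thesis using kp_Jk[OF k] by simp
  qed
  have cT: "c (2*p+1) = 0"
  proof -
    have "0 = (\<Sum>i\<in>{0..2*p+1}. c i * \<phi> (z i) (2*p+1))" using fun_cong[OF pv, of "2*p+1"] by simp
    also have "\<dots> = (\<Sum>i\<in>{0..2*p+1}. if i = 2*p+1 then c (2*p+1) else 0)"
    proof (rule sum.cong)
      fix i assume i: "i \<in> {0..2*p+1}"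
      show "c i * \<phi> (z i) (2*p+1) = (if i = 2*p+1 then c (2*p+1) else 0)"
      proof (cases "i = 0")
        case True then show ?thesis by (simp add: phi_z0)
      next
        case False
        then have i1: "i \<in> {1..2*p+1}" using i by auto
        show ?thesis unfolding phi_z[OF i1] fT[OF i1] by simp
      qed
    qed simp
    also have "\<dots> = c (2*p+1)" by simp
    finally show ?thesis by simp
  qed
  have c1: "c i = 0" if "i \<in> {1..2*p+1}" for i
    using that ck cT by (cases "i = 2*p+1") auto
  have "(\<Sum>i\<in>{0..2*p+1}. sm (c i) (z i)) = sm (c 0) (z 0) + (\<Sum>i\<in>{Suc 0..2*p+1}. sm (c i) (z i))"
    by (rule sum.atLeast_Suc_atMost) simp
  also have "(\<Sum>i\<in>{Suc 0..2*p+1}. sm (c i) (z i)) = 0"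
    by (rule sum.neutral) (use c1 in auto)
  finally have "sm (c 0) y = 0" using v by (simp add: z0)
  then have "c 0 = 0" by simp
  then show ?thesis using c1 by (metis atLeastAtMost_iff le_0_eq not_less_eq_eq One_nat_def)
qed

end

context hpa1 begin

lemma z_inj: "inj_on z {0..2*p+1}"
proof (rule inj_onI, rule ccontr)
  fix i k assume i: "i \<in> {0..2*p+1}" and k: "k \<in> {0..2*p+1}" and e: "z i = z k" and ne: "i \<noteq> k"
  define c where "c l = (if l = i then 1 else if l = k then -1 else (0::complex))" for l
  have "(\<Sum>l\<in>{0..2*p+1}. sm (c l) (z l)) = (\<Sum>l\<in>{0..2*p+1}. (if l = i then z i else 0) + (if l = k then - z k else 0))"
    by (rule sum.cong) (auto simp: c_def ne)
  also have "\<dots> = z i + - z k" using i k by (simp add: sum.distrib)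
  also have "\<dots> = 0" using e by simp
  finally have "\<forall>l\<in>{0..2*p+1}. c l = 0" by (rule indep_fam)
  then have "c i = 0" using i by blast
  then show False by (simp add: c_def)
qed

lemma z_indep: "independent (z ` {0..2*p+1})"
proof (rule independent_if_scalars_zero)
  show "finite (z ` {0..2*p+1})" by simp
next
  fix c :: "'a \<Rightarrow> complex" and x
  assume s0: "(\<Sum>x\<in>z ` {0..2*p+1}. sm (c x) x) = 0" and x: "x \<in> z ` {0..2*p+1}"
  have "(\<Sum>i\<in>{0..2*p+1}. sm ((c \<circ> z) i) (z i)) = 0"
    using s0 sum.reindex[OF z_inj, of "\<lambda>x. sm (c x) x"] by (simp add: comp_def)
  then have "\<forall>i\<in>{0..2*p+1}. (c \<circ> z) i = 0" by (rule indep_fam)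
  then show "c x = 0" using x by auto
qed

lemma span_W: "u \<in> span (insert y ((\<lambda>c. s (ev c)) ` {1..2*p+1}))"
proof -
  let ?W = "insert y ((\<lambda>c. s (ev c)) ` {1..2*p+1})"
  have "u - s (\<phi> u) \<in> I" by (simp add: mem_I phi_diff s_props)
  then have "u - s (\<phi> u) \<in> span {y}" using I_span by simp
  then have 1: "u - s (\<phi> u) \<in> span ?W" using span_mono[of "{y}" ?W] by blast
  have "s (\<phi> u) = (\<Sum>c\<in>{1..2*p+1}. sm (\<phi> u c) (s (ev c)))"
    by (rule lin_expand[where F=s]) (simp_all add: s_add s_sc s_zero)
  also have "\<dots> \<in> span ?W"
    by (rule span_sum, rule span_scale, rule span_base) auto
  finally have "s (\<phi> u) \<in> span ?W" .
  from span_add[OF 1 this] show ?thesis by simp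
qed

lemma z_span: "span (z ` {0..2*p+1}) = UNIV"
proof (rule ccontr)
  assume "span (z ` {0..2*p+1}) \<noteq> UNIV"
  then obtain u where u: "u \<notin> span (z ` {0..2*p+1})" by blast
  let ?W = "insert y ((\<lambda>c. s (ev c)) ` {1..2*p+1})"
  let ?Z = "z ` {0..2*p+1}"
  have ind: "independent (insert u ?Z)" using u z_indep by (rule independent_insertI)
  have "insert u ?Z \<subseteq> span ?W" using span_W by blast
  then have "card (insert u ?Z) \<le> card ?W" using independent_span_bound[OF _ ind] by simp
  also have "\<dots> \<le> Suc (card ((\<lambda>c. s (ev c)) ` {1..2*p+1}))" by (simp add: card_insert_if)
  also have "\<dots> \<le> Suc (card {1..2*p+1})" using card_image_le[of "{1..2*p+1}" "\<lambda>c. s (ev c)"] by simp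
  finally have c1: "card (insert u ?Z) \<le> 2*p+2" by simp
  have "u \<notin> ?Z" using u span_base by blast
  then have "card (insert u ?Z) = Suc (card ?Z)" by simp
  also have "card ?Z = 2*p+2" using card_image[OF z_inj] by simp
  finally show False using c1 by simp
qed

lemma NP_z: "NP sm br = span {z 0}" using I_span z0 by simp

end

lemma structure_lemma:
  fixes sm :: "complex \<Rightarrow> 'a::ab_group_add \<Rightarrow> 'a" and br :: "'a \<Rightarrow> 'a \<Rightarrow> 'a" and p :: nat
  assumes "p \<ge> 1" "lie_algebra sm br" "HpA p 1 sm br"
  shows "\<exists>z. inj_on z {0..2*p+1} \<and> \<not> module.dependent sm (z ` {0..2*p+1})
    \<and> module.span sm (z ` {0..2*p+1}) = UNIV \<and> NP sm br = module.span sm {z 0}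
    \<and> (\<forall>i\<in>{0..2*p+1}. \<forall>k\<in>{0..2*p+1}. br (z i) (z k) = sm (Cc i k) (z 0) + sm (Jf i k) (z (2*p+1)))"
proof -
  obtain \<phi> :: "'a \<Rightarrow> nat \<Rightarrow> complex" where
    ph: "\<forall>u v. \<phi> (u + v) = (\<lambda>i. \<phi> u i + \<phi> v i)" "\<forall>c u. \<phi> (sm c u) = (\<lambda>i. c * \<phi> u i)"
      "\<forall>u v. \<phi> (br u v) = heis_br p (\<phi> u) (\<phi> v)" "range \<phi> = heis_carrier p"
      "{u. \<phi> u = (\<lambda>_. 0)} = NP sm br"
    and d: "vector_space.dim sm (NP sm br) = 1"
    using assms(3) unfolding HpA_def by blast
  interpret hpa1 sm br p \<phi>
    by unfold_locales (use assms ph d in \<open>auto simp: vadd_def vsc_def\<close>)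
  show ?thesis using z_inj z_indep z_span NP_z table by blast
qed

lemma bil_eq:
  fixes s1 :: "complex \<Rightarrow> 'a::ab_group_add \<Rightarrow> 'a" and s2 :: "complex \<Rightarrow> 'b::ab_group_add \<Rightarrow> 'b"
  assumes vs: "vector_space s1" "vector_space s2"
    and sp: "module.span s1 B = UNIV"
    and l1: "\<And>u. Vector_Spaces.linear s1 s2 (F u)" "\<And>u. Vector_Spaces.linear s1 s2 (G u)"
    and l2: "\<And>v. Vector_Spaces.linear s1 s2 (\<lambda>u. F u v)" "\<And>v. Vector_Spaces.linear s1 s2 (\<lambda>u. G u v)"
    and ag: "\<And>u v. u \<in> B \<Longrightarrow> v \<in> B \<Longrightarrow> F u v = G u v"
  shows "F u v = G u v"
proof -
  interpret vector_space_pair s1 s2 using vs by (simp add: vector_space_pair_def)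
  have A: "F u' v' = G u' v'" if "u' \<in> B" for u' v'
    by (rule linear_eq_on[OF l1(1) l1(2)]) (use sp ag that in auto)
  show ?thesis
    by (rule linear_eq_on[OF l2(1) l2(2), of _ B]) (use sp A in auto)
qed


theorem theorem5p1:
  fixes sm :: "complex \<Rightarrow> 'a::ab_group_add \<Rightarrow> 'a" and br :: "'a \<Rightarrow> 'a \<Rightarrow> 'a"
    and p :: nat
  assumes "p \<ge> 1" and "lie_algebra sm br" and "fin_dim sm" and "HpA p 1 sm br"
  shows "(\<exists>(x :: nat \<Rightarrow> 'a) y.
            inj_on x {1..2*p+1} \<and> y \<notin> x ` {1..2*p+1}
          \<and> \<not> module.dependent sm (x ` {1..2*p+1} \<union> {y})
          \<and> module.span sm (x ` {1..2*p+1} \<union> {y}) = UNIV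
          \<and> NP sm br = module.span sm {y}
          \<and> (\<forall>l\<in>{1..p}. br (x (2*l-1)) (x (2*l)) = x (2*p+1))
          \<and> br (x 1) y = y
          \<and> (\<forall>i\<in>{2..2*p+1}. br (x i) y = 0)
          \<and> (\<forall>i j. 1 \<le> i \<and> i < j \<and> j \<le> 2*p+1 \<and> \<not> (\<exists>l\<in>{1..p}. i = 2*l-1 \<and> j = 2*l)
                   \<longrightarrow> br (x i) (x j) = 0))
       \<and> (\<forall>(sm2 :: complex \<Rightarrow> 'b::ab_group_add \<Rightarrow> 'b) br2.
            lie_algebra sm2 br2 \<and> fin_dim sm2 \<and> HpA p 1 sm2 br2
            \<longrightarrow> (\<exists>f. lie_iso sm br sm2 br2 f))"
proof -
  have vs: "vector_space sm" using assms(2) by (simp add: lie_algebra_def)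
  interpret vs: vector_space sm by (rule vs)
  obtain z where zinj: "inj_on z {0..2*p+1}" and zind: "\<not> module.dependent sm (z ` {0..2*p+1})"
    and zsp: "module.span sm (z ` {0..2*p+1}) = UNIV" and znp: "NP sm br = module.span sm {z 0}"
    and ztab: "\<And>i k. i \<in> {0..2*p+1} \<Longrightarrow> k \<in> {0..2*p+1} \<Longrightarrow>
        br (z i) (z k) = sm (Cc i k) (z 0) + sm (Jf i k) (z (2*p+1))"
    using structure_lemma[OF assms(1,2,4)] by blast
  have seteq: "z ` {1..2*p+1} \<union> {z 0} = z ` {0..2*p+1}" by (auto simp: image_iff) (metis le_0_eq not_less_eq_eq One_nat_def atLeastAtMost_iff)
  have P1: "\<exists>(x :: nat \<Rightarrow> 'a) y.
            inj_on x {1..2*p+1} \<and> y \<notin> x ` {1..2*p+1}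
          \<and> \<not> module.dependent sm (x ` {1..2*p+1} \<union> {y})
          \<and> module.span sm (x ` {1..2*p+1} \<union> {y}) = UNIV
          \<and> NP sm br = module.span sm {y}
          \<and> (\<forall>l\<in>{1..p}. br (x (2*l-1)) (x (2*l)) = x (2*p+1))
          \<and> br (x 1) y = y
          \<and> (\<forall>i\<in>{2..2*p+1}. br (x i) y = 0)
          \<and> (\<forall>i j. 1 \<le> i \<and> i < j \<and> j \<le> 2*p+1 \<and> \<not> (\<exists>l\<in>{1..p}. i = 2*l-1 \<and> j = 2*l)
                   \<longrightarrow> br (x i) (x j) = 0)"
  proof (intro exI[of _ z] exI[of _ "z 0"] conjI)
    show "inj_on z {1..2*p+1}" by (rule inj_on_subset[OF zinj]) auto
    show "z 0 \<notin> z ` {1..2*p+1}"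
    proof
      assume "z 0 \<in> z ` {1..2*p+1}"
      then obtain i where i: "i \<in> {1..2*p+1}" "z 0 = z i" by blast
      then have "0 = i" using inj_onD[OF zinj i(2)] by auto
      then show False using i by simp
    qed
    show "\<not> module.dependent sm (z ` {1..2*p+1} \<union> {z 0})" unfolding seteq by (rule zind)
    show "module.span sm (z ` {1..2*p+1} \<union> {z 0}) = UNIV" unfolding seteq by (rule zsp)
    show "NP sm br = module.span sm {z 0}" by (rule znp)
    show "\<forall>l\<in>{1..p}. br (z (2*l-1)) (z (2*l)) = z (2*p+1)"
    proof
      fix l assume l: "l \<in> {1..p}"
      have "br (z (2*l-1)) (z (2*l)) = sm (Cc (2*l-1) (2*l)) (z 0) + sm (Jf (2*l-1) (2*l)) (z (2*p+1))"
        by (rule ztab) (use l in auto)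
      moreover have "Cc (2*l-1) (2*l) = 0" "Jf (2*l-1) (2*l) = 1" using l by (auto simp: Cc_def Jf_def)
      ultimately show "br (z (2*l-1)) (z (2*l)) = z (2*p+1)" by simp
    qed
    have "br (z 1) (z 0) = sm (Cc 1 0) (z 0) + sm (Jf 1 0) (z (2*p+1))" by (rule ztab) auto
    then show "br (z 1) (z 0) = z 0" by (simp add: Cc_def Jf_def)
    show "\<forall>i\<in>{2..2*p+1}. br (z i) (z 0) = 0"
    proof
      fix i assume i: "i \<in> {2..2*p+1}"
      have "br (z i) (z 0) = sm (Cc i 0) (z 0) + sm (Jf i 0) (z (2*p+1))" by (rule ztab) (use i in auto)
      then show "br (z i) (z 0) = 0" using i by (simp add: Cc_def Jf_def)
    qed
    show "\<forall>i j. 1 \<le> i \<and> i < j \<and> j \<le> 2*p+1 \<and> \<not> (\<exists>l\<in>{1..p}. i = 2*l-1 \<and> j = 2*l)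
                   \<longrightarrow> br (z i) (z j) = 0"
    proof (intro allI impI)
      fix i j assume h: "1 \<le> i \<and> i < j \<and> j \<le> 2*p+1 \<and> \<not> (\<exists>l\<in>{1..p}. i = 2*l-1 \<and> j = 2*l)"
      have "br (z i) (z j) = sm (Cc i j) (z 0) + sm (Jf i j) (z (2*p+1))" by (rule ztab) (use h in auto)
      moreover have "Cc i j = 0" using h by (auto simp: Cc_def)
      moreover have "Jf i j = 0"
      proof (rule ccontr)
        assume "Jf i j \<noteq> 0"
        then have o: "odd i" "j = i + 1" using h by (auto simp: Jf_def split: if_splits)
        then obtain q where q: "i = 2*q+1" by (blast elim: oddE)
        have "q + 1 \<in> {1..p}" "i = 2*(q+1)-1" "j = 2*(q+1)" using q o h by auto
        then show False using h by blast
      qed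
      ultimately show "br (z i) (z j) = 0" by simp
    qed
  qed
  have P2: "\<forall>(sm2 :: complex \<Rightarrow> 'b::ab_group_add \<Rightarrow> 'b) br2.
            lie_algebra sm2 br2 \<and> fin_dim sm2 \<and> HpA p 1 sm2 br2
            \<longrightarrow> (\<exists>f. lie_iso sm br sm2 br2 f)"
  proof (intro allI impI)
    fix sm2 :: "complex \<Rightarrow> 'b::ab_group_add \<Rightarrow> 'b" and br2
    assume h2: "lie_algebra sm2 br2 \<and> fin_dim sm2 \<and> HpA p 1 sm2 br2"
    have vs2: "vector_space sm2" using h2 by (simp add: lie_algebra_def)
    interpret vs2: vector_space sm2 by (rule vs2)
    obtain z2 where z2inj: "inj_on z2 {0..2*p+1}" and z2ind: "\<not> module.dependent sm2 (z2 ` {0..2*p+1})"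
      and z2sp: "module.span sm2 (z2 ` {0..2*p+1}) = UNIV"
      and z2tab: "\<And>i k. i \<in> {0..2*p+1} \<Longrightarrow> k \<in> {0..2*p+1} \<Longrightarrow>
        br2 (z2 i) (z2 k) = sm2 (Cc i k) (z2 0) + sm2 (Jf i k) (z2 (2*p+1))"
      using structure_lemma[OF assms(1), of sm2 br2] h2 by blast
    interpret p12: vector_space_pair sm sm2 using vs vs2 by (simp add: vector_space_pair_def)
    interpret p21: vector_space_pair sm2 sm using vs vs2 by (simp add: vector_space_pair_def)
    interpret p11: vector_space_pair sm sm using vs by (simp add: vector_space_pair_def)
    interpret p22: vector_space_pair sm2 sm2 using vs2 by (simp add: vector_space_pair_def)
    define f where "f = p12.construct (z ` {0..2*p+1}) (\<lambda>v. z2 (the_inv_into {0..2*p+1} z v))"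
    define h where "h = p21.construct (z2 ` {0..2*p+1}) (\<lambda>v. z (the_inv_into {0..2*p+1} z2 v))"
    have flin: "Vector_Spaces.linear sm sm2 f" unfolding f_def by (rule p12.linear_construct) (rule zind)
    have hlin: "Vector_Spaces.linear sm2 sm h" unfolding h_def by (rule p21.linear_construct) (rule z2ind)
    have fz: "f (z i) = z2 i" if "i \<in> {0..2*p+1}" for i
      unfolding f_def using that p12.construct_basis[OF zind, of "z i"] the_inv_into_f_f[OF zinj that] by simp
    have hz: "h (z2 i) = z i" if "i \<in> {0..2*p+1}" for i
      unfolding h_def using that p21.construct_basis[OF z2ind, of "z2 i"] the_inv_into_f_f[OF z2inj that] by simp
    have hf: "h (f x) = x" for x
    proof -
      have "(h \<circ> f) x = id x"
        by (rule p11.linear_eq_on[OF Vector_Spaces.linear_compose[OF flin hlin] vs.linear_id, of _ "z ` {0..2*p+1}"])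
           (use zsp fz hz in auto)
      then show ?thesis by simp
    qed
    have fh: "f (h x) = x" for x
    proof -
      have "(f \<circ> h) x = id x"
        by (rule p22.linear_eq_on[OF Vector_Spaces.linear_compose[OF hlin flin] vs2.linear_id, of _ "z2 ` {0..2*p+1}"])
           (use z2sp fz hz in auto)
      then show ?thesis by simp
    qed
    have bij: "bij f" by (metis bijI injI surjI hf fh)
    have fadd: "f (u + v) = f u + f v" for u v
      using flin unfolding Vector_Spaces.linear_iff by blast
    have fsc: "f (sm c u) = sm2 c (f u)" for u c
      using flin unfolding Vector_Spaces.linear_iff by blast
    have la: "lie_algebra sm br" by (rule assms(2))
    have la2: "lie_algebra sm2 br2" using h2 by simp
    have brk: "f (br u v) = br2 (f u) (f v)" for u v
    proof (rule bil_eq[OF vs vs2 zsp, where F="\<lambda>u v. f (br u v)" and G="\<lambda>u v. br2 (f u) (f v)"])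
      show "Vector_Spaces.linear sm sm2 (\<lambda>v. f (br u v))" for u
        using la vs vs2 unfolding Vector_Spaces.linear_iff lie_algebra_def by (simp add: fadd fsc)
      show "Vector_Spaces.linear sm sm2 (\<lambda>v. br2 (f u) (f v))" for u
        using la2 vs vs2 unfolding Vector_Spaces.linear_iff lie_algebra_def by (simp add: fadd fsc)
      show "Vector_Spaces.linear sm sm2 (\<lambda>u. f (br u v))" for v
        using la vs vs2 unfolding Vector_Spaces.linear_iff lie_algebra_def by (simp add: fadd fsc)
      show "Vector_Spaces.linear sm sm2 (\<lambda>u. br2 (f u) (f v))" for v
        using la2 vs vs2 unfolding Vector_Spaces.linear_iff lie_algebra_def by (simp add: fadd fsc)
      fix u v assume u: "u \<in> z ` {0..2*p+1}" and v: "v \<in> z ` {0..2*p+1}"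
      then obtain i k where ik: "i \<in> {0..2*p+1}" "k \<in> {0..2*p+1}" "u = z i" "v = z k" by blast
      have T: "2*p+1 \<in> {0..2*p+1}" "0 \<in> {0..2*p+1}" by auto
      show "f (br u v) = br2 (f u) (f v)"
        unfolding ik(3,4) ztab[OF ik(1,2)] fz[OF ik(1)] fz[OF ik(2)] z2tab[OF ik(1,2)] fadd fsc fz[OF T(1)] fz[OF T(2)] ..
    qed
    show "\<exists>f. lie_iso sm br sm2 br2 f"
      unfolding lie_iso_def using flin bij brk by blast
  qed
  show ?thesis using P1 P2 by blast
qed


end
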